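(* Let $k$ be algebraically closed of characteristic $\neq 2,3$. For every $a\in k\setminus\{0,1\}$, $\langle a\rangle=-\,a\star\langle a^{-1}\rangle$ in $TB_2(k)$.
   Context: $R$ is the local ring of ${\mathbb A}^1_k=\mathrm{Spec}\,k[t]$ at $t=0$, $\mathfrak m=tR$. $\langle a,b\rangle$ are Dennis–Stein (pointy bracket) symbols in the relative group $K_2(R,\mathfrak m^2)$, defined for $(a,b)\in(R\times\mathfrak m^2)\cup(\mathfrak m^2\times R)$. $\mathcal C$ is the subgroup generated by the $\langle a,b\rangle$ with $a\in\mathfrak m^2$, $b\in k$; $TB_2(k):=K_2(R,\mathfrak m^2)/\mathcal C$. For $c\in k^\times$ and $x\in TB_2(k)$, $c\star x$ is the image of $x$ under the automorphism of $R$ induced by $t\mapsto ct$. For $a\in k\setminus\{0,1\}$, $\langle a\rangle:=\big\langle t^2,\tfrac{a(1-a)}{t-1}\big\rangle\in TB_2(k)$. *)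

theory Defs
  imports "HOL-Computational_Algebra.Polynomial_FPS"
begin

text \<open>The local ring R of the affine line at t = 0, realised inside k[[t]]:
  fractions p/q of polynomials with q(0) nonzero.\<close>
definition locR :: "'k::field fps set" where
  "locR = {f. \<exists>p q. poly q 0 \<noteq> 0 \<and> f = fps_of_poly p * inverse (fps_of_poly q)}"

definition msq :: "'k::field fps set" where
  "msq = {fps_X ^ 2 * g | g. g \<in> locR}"

definition ds_dom :: "'k::field fps \<Rightarrow> 'k fps \<Rightarrow> bool" where
  "ds_dom a b \<longleftrightarrow> (a \<in> locR \<and> b \<in> msq) \<or> (a \<in> msq \<and> b \<in> locR)"

text \<open>Keune's presentation of K_2(R,I) for I inside the Jacobson radical:
  a map s satisfying (D1)-(D3) is exactly a homomorphism out of K_2(R, m^2)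
  evaluated on the symbols.\<close>
definition DS_map :: "('k::field fps \<Rightarrow> 'k fps \<Rightarrow> 'g::ab_group_add) \<Rightarrow> bool" where
  "DS_map s \<longleftrightarrow>
     (\<forall>a b. ds_dom a b \<longrightarrow> s a b = - s b a) \<and>
     (\<forall>a\<in>locR. \<forall>b\<in>locR. \<forall>c\<in>locR. (a \<in> msq \<or> (b \<in> msq \<and> c \<in> msq)) \<longrightarrow>
         s a b + s a c = s a (b + c - a * b * c)) \<and>
     (\<forall>a\<in>locR. \<forall>b\<in>locR. \<forall>c\<in>locR. (a \<in> msq \<or> b \<in> msq \<or> c \<in> msq) \<longrightarrow>
         s a (b * c) = s (a * b) c + s (a * c) b)"

text \<open>Maps out of TB_2(k) = K_2(R,m^2)/C: additionally kill the symbols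
  with a in m^2 and b a constant in k.\<close>
definition TB2_map :: "('k::field fps \<Rightarrow> 'k fps \<Rightarrow> 'g::ab_group_add) \<Rightarrow> bool" where
  "TB2_map s \<longleftrightarrow> DS_map s \<and> (\<forall>a\<in>msq. \<forall>b. s a (fps_const b) = 0)"

definition tscale :: "'k::field \<Rightarrow> 'k fps \<Rightarrow> 'k fps" where
  "tscale c f = Abs_fps (\<lambda>n. c ^ n * fps_nth f n)"

text \<open>The pair (t^2, a(1-a)/(t-1)) underlying the element <a> of TB_2(k).\<close>
definition angle_fst :: "'k::field fps" where
  "angle_fst = fps_X ^ 2"

definition angle_snd :: "'k::field \<Rightarrow> 'k fps" where
  "angle_snd a = fps_const (a * (1 - a)) * inverse (fps_X - 1)"

definition alg_closed_field :: "'k::field itself \<Rightarrow> bool" where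
  "alg_closed_field _ \<longleftrightarrow> (\<forall>p :: 'k poly. degree p \<ge> 1 \<longrightarrow> (\<exists>x. poly p x = 0))"

end

theory Submission
  imports Defs
begin

unbundle fps_syntax

lemma tscale_mult: "tscale c (f * g) = tscale c f * tscale c g"
proof -
  have "c ^ n * (\<Sum>i=0..n. f $ i * g $ (n - i)) =
        (\<Sum>i=0..n. c ^ i * f $ i * (c ^ (n - i) * g $ (n - i)))" for n
    unfolding sum_distrib_left
  proof (rule sum.cong)
    fix i assume "i \<in> {0..n}"
    then have "c ^ n = c ^ i * c ^ (n - i)" by (simp add: power_add[symmetric])
    then show "c ^ n * (f $ i * g $ (n - i)) = c ^ i * f $ i * (c ^ (n - i) * g $ (n - i))"
      by (simp add: algebra_simps)
  qed simp
  then show ?thesis unfolding tscale_def by (simp add: fps_eq_iff fps_mult_nth)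
qed

lemma tscale_const: "tscale c (fps_const b) = fps_const b"
  unfolding tscale_def by (simp add: fps_eq_iff)

lemma tscale_one: "tscale c 1 = 1"
  unfolding tscale_def by (simp add: fps_eq_iff)

lemma tscale_diff: "tscale c (f - g) = tscale c f - tscale c g"
  unfolding tscale_def by (simp add: fps_eq_iff algebra_simps)

lemma tscale_X: "tscale c fps_X = fps_const c * fps_X"
  unfolding tscale_def by (simp add: fps_eq_iff fps_X_def)

lemma tscale_X2: "tscale c (fps_X ^ 2) = fps_const (c ^ 2) * fps_X ^ 2"
proof -
  have "tscale c (fps_X ^ 2) = (fps_const c * fps_X) * (fps_const c * fps_X)"
    by (simp only: power2_eq_square tscale_mult tscale_X)
  also have "\<dots> = (fps_const c * fps_const c) * (fps_X * fps_X)"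
    by (simp only: mult_ac)
  also have "\<dots> = fps_const (c ^ 2) * fps_X ^ 2"
    by (simp only: fps_const_mult power2_eq_square)
  finally show ?thesis .
qed

lemma tscale_inverse:
  assumes "f $ 0 \<noteq> 0"
  shows "tscale c (inverse f) = inverse (tscale c f)"
proof -
  have "tscale c f * tscale c (inverse f) = 1"
    using assms by (simp add: tscale_mult[symmetric] inverse_mult_eq_1' tscale_one)
  then show ?thesis by (rule fps_inverse_unique[symmetric])
qed

lemma locR_I: "poly q 0 \<noteq> 0 \<Longrightarrow> fps_of_poly p * inverse (fps_of_poly q) \<in> locR"
  unfolding locR_def by blast

lemma locR_frac:
  assumes "b \<noteq> 0"
  shows "fps_const (c::'k::field) * inverse (fps_const b * fps_X - 1) \<in> locR"
proof -
  have "fps_of_poly [:c:] * inverse (fps_of_poly [:-1, b:]) \<in> locR"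
    by (rule locR_I) simp
  moreover have "fps_of_poly [:-1, b:] = fps_const b * fps_X - (1::'k fps)"
    by (simp add: fps_of_poly_pCons fps_of_poly_const algebra_simps fps_const_neg[symmetric])
  ultimately show ?thesis by (simp add: fps_of_poly_const)
qed

lemma locR_const: "fps_const (c::'k::field) \<in> locR"
proof -
  have "fps_of_poly [:c:] * inverse (fps_of_poly 1) \<in> locR"
    by (rule locR_I) simp
  then show ?thesis by (simp add: fps_of_poly_const)
qed

lemma locR_X2: "(fps_X ^ 2 :: 'k::field fps) \<in> locR"
proof -
  have "fps_of_poly (monom (1::'k) 2) * inverse (fps_of_poly 1) \<in> locR"
    by (rule locR_I) simp
  then show ?thesis by (simp add: fps_of_poly_monom')
qed

lemma msq_I: "g \<in> locR \<Longrightarrow> fps_X ^ 2 * g \<in> msq"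
  unfolding msq_def by blast

lemma msq_X2: "(fps_X ^ 2 :: 'k::field fps) \<in> msq"
  using msq_I[OF locR_const[of 1]] by simp

lemma key_ring:
  fixes \<alpha> X iP iQ :: "'a::comm_ring_1"
  assumes "(X - 1) * iP = 1" "(\<alpha> * X - 1) * iQ = 1"
  shows "\<alpha> * (1 - \<alpha>) * iP + (\<alpha> - 1) * iQ - X ^ 2 * (\<alpha> * (1 - \<alpha>) * iP) * ((\<alpha> - 1) * iQ) = (1 - \<alpha>) ^ 2"
proof -
  have "\<alpha> * (1 - \<alpha>) * iP + (\<alpha> - 1) * iQ - X ^ 2 * (\<alpha> * (1 - \<alpha>) * iP) * ((\<alpha> - 1) * iQ)
     = \<alpha> * (1 - \<alpha>) * iP * ((\<alpha> * X - 1) * iQ) + (\<alpha> - 1) * iQ * ((X - 1) * iP) - X ^ 2 * (\<alpha> * (1 - \<alpha>) * iP) * ((\<alpha> - 1) * iQ)"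
    using assms by simp
  also have "\<dots> = iP * iQ * ((1 - \<alpha>) ^ 2 * (X - 1) * (\<alpha> * X - 1))"
    by (simp add: algebra_simps power2_eq_square)
  also have "\<dots> = (1 - \<alpha>) ^ 2 * ((X - 1) * iP) * ((\<alpha> * X - 1) * iQ)"
    by (simp add: algebra_simps)
  also have "\<dots> = (1 - \<alpha>) ^ 2" using assms by simp
  finally show ?thesis .
qed

lemma key_fps: "fps_const (a * (1 - a)) * inverse (fps_const 1 * fps_X - 1) + fps_const (a - 1) * inverse (fps_const a * fps_X - 1)
   - fps_X ^ 2 * (fps_const (a * (1 - a)) * inverse (fps_const 1 * fps_X - 1)) * (fps_const (a - 1) * inverse (fps_const (a::'k::field) * fps_X - 1))
   = fps_const ((1 - a) ^ 2)"
proof -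
  have P: "(fps_X - 1) * inverse (fps_X - 1 :: 'k fps) = 1" by (rule inverse_mult_eq_1') simp
  have Q: "(fps_const a * fps_X - 1) * inverse (fps_const a * fps_X - 1 :: 'k fps) = 1" by (rule inverse_mult_eq_1') simp
  have o: "1 - fps_const a = fps_const (1 - a)" by (simp add: fps_eq_iff)
  have c1: "fps_const (a * (1 - a)) = fps_const a * (1 - fps_const a)" by (simp add: o)
  have c2: "fps_const (a - 1) = fps_const a - 1" by (simp add: fps_eq_iff)
  have c3: "fps_const ((1 - a) ^ 2) = (1 - fps_const a) ^ 2" by (simp add: o)
  have c4: "fps_const 1 * fps_X = (fps_X :: 'k fps)" by simp
  show ?thesis unfolding c1 c2 c3 c4 by (rule key_ring[OF P Q])
qed
lemma tB: "tscale a (fps_const (inverse a * (1 - inverse a)) * inverse (fps_X - 1))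
   = fps_const (inverse a * (1 - inverse a)) * inverse (fps_const (a::'k::field) * fps_X - 1)"
proof -
  have i: "tscale a (fps_X - 1) = fps_const a * fps_X - 1"
    by (simp only: tscale_diff tscale_X tscale_one)
  have n: "(fps_X - 1 :: 'k fps) $ 0 \<noteq> 0" by simp
  have "tscale a (inverse (fps_X - 1)) = inverse (fps_const a * fps_X - 1)"
    using tscale_inverse[OF n, of a] unfolding i .
  then show ?thesis by (simp only: tscale_mult tscale_const)
qed

lemma B2eq: assumes "(a::'k::field) \<noteq> 0"
  shows "fps_const (a ^ 2) * (fps_const (inverse a * (1 - inverse a)) * I) = fps_const (a - 1) * I"
proof -
  have e: "a ^ 2 * (inverse a * (1 - inverse a)) = a - 1" using assms by (simp add: field_simps power2_eq_square)
  have "fps_const (a ^ 2) * (fps_const (inverse a * (1 - inverse a)) * I) = fps_const (a ^ 2 * (inverse a * (1 - inverse a))) * I"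
    by (simp only: mult.assoc[symmetric] fps_const_mult)
  then show ?thesis by (simp only: e)
qed

theorem lemma3p6:
  fixes a :: "'k::field" and s :: "'k fps \<Rightarrow> 'k fps \<Rightarrow> 'g::ab_group_add"
  assumes "alg_closed_field TYPE('k)"
    and "(2::'k) \<noteq> 0" and "(3::'k) \<noteq> 0"
    and "a \<noteq> 0" and "a \<noteq> 1"
    and "TB2_map s"
  shows "s angle_fst (angle_snd a)
         = - s (tscale a angle_fst) (tscale a (angle_snd (inverse a)))"
proof -
  define X2 :: "'k fps" where "X2 = fps_X ^ 2"
  define A where "A = fps_const (a * (1 - a)) * inverse (fps_const 1 * fps_X - 1)"
  define B where "B = fps_const (inverse a * (1 - inverse a)) * inverse (fps_const a * fps_X - 1)"
  define B2 where "B2 = fps_const (a - 1) * inverse (fps_const a * fps_X - 1)"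
  have DS: "DS_map s" and C0: "\<And>x b. x \<in> msq \<Longrightarrow> s x (fps_const b) = 0"
    using assms(6) unfolding TB2_map_def by auto
  note Dall = DS[unfolded DS_map_def]
  note D2a = conjunct1[OF conjunct2[OF Dall]]
  note D3a = conjunct2[OF conjunct2[OF Dall]]
  have D2: "s x b + s x c = s x (b + c - x * b * c)"
    if "x \<in> locR" "b \<in> locR" "c \<in> locR" "x \<in> msq" for x b c
    using D2a that by simp
  have D3: "s x (b * c) = s (x * b) c + s (x * c) b"
    if "x \<in> locR" "b \<in> locR" "c \<in> locR" "x \<in> msq" for x b c
    using D3a that by simp
  have X2R: "X2 \<in> locR" and X2M: "X2 \<in> msq" unfolding X2_def using locR_X2 msq_X2 by auto
  have AR: "A \<in> locR" unfolding A_def by (rule locR_frac) simp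
  have BR: "B \<in> locR" unfolding B_def by (rule locR_frac) (rule assms(4))
  have B2R: "B2 \<in> locR" unfolding B2_def by (rule locR_frac) (rule assms(4))
  have lhs: "s angle_fst (angle_snd a) = s X2 A"
    unfolding angle_fst_def angle_snd_def X2_def A_def by (simp only: fps_const_1_eq_1 mult_1_left)
  have tB: "tscale a (angle_snd (inverse a)) = B"
    unfolding angle_snd_def B_def by (rule tB)
  have tA: "tscale a angle_fst = X2 * fps_const (a ^ 2)"
    unfolding angle_fst_def X2_def by (simp add: tscale_X2 mult.commute)
  have B2eq: "fps_const (a ^ 2) * B = B2"
    unfolding B_def B2_def using assms(4) by (rule B2eq)
  have step1: "s X2 B2 = s (X2 * fps_const (a ^ 2)) B"
  proof -
    have "s X2 (fps_const (a ^ 2) * B) = s (X2 * fps_const (a ^ 2)) B + s (X2 * B) (fps_const (a ^ 2))"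
      by (rule D3[OF X2R locR_const BR X2M])
    moreover have "s (X2 * B) (fps_const (a ^ 2)) = 0"
      by (rule C0) (unfold X2_def, rule msq_I[OF BR])
    ultimately show ?thesis using B2eq by simp
  qed
  have key: "A + B2 - X2 * A * B2 = fps_const ((1 - a) ^ 2)"
    unfolding A_def B2_def X2_def by (rule key_fps)
  have "s X2 A + s X2 B2 = s X2 (fps_const ((1 - a) ^ 2))"
    using D2[OF X2R AR B2R X2M] unfolding key .
  also have "\<dots> = 0" by (rule C0[OF X2M])
  finally have fin: "s X2 A = - s X2 B2" by (simp add: eq_neg_iff_add_eq_0)
  show ?thesis unfolding lhs tA tB step1[symmetric] by (rule fin)
qed

end
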